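(* Let $\eta\in(0,\pi/3)$. If $w_0<0$, then $w_0\in\triangle(0,z_2,z_3)\cap\triangle(0,\bar z_2,\bar z_3)$.
   Context: Let $a=\frac{e^{-i\eta}}{2\cos\eta}$, $c=\frac{1}{1-|a|^4}$, $z_k=ca^{k+1}$ for $k\ge0$, and $w_0=1-c|a|^2$ (a real number). For $u,v,w\in\mathbb{C}$, $\triangle(u,v,w)$ denotes the closed solid triangle with vertices $u,v,w$. *)

theory Defs
  imports "HOL-Analysis.Analysis"
begin

definition tri_a :: "real \<Rightarrow> complex" where
  "tri_a \<eta> = exp (- \<i> * of_real \<eta>) / (2 * of_real (cos \<eta>))"

definition tri_c :: "real \<Rightarrow> real" where
  "tri_c \<eta> = 1 / (1 - cmod (tri_a \<eta>) ^ 4)"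

definition tri_z :: "real \<Rightarrow> nat \<Rightarrow> complex" where
  "tri_z \<eta> k = of_real (tri_c \<eta>) * tri_a \<eta> ^ (k + 1)"

definition tri_w0 :: "real \<Rightarrow> real" where
  "tri_w0 \<eta> = 1 - tri_c \<eta> * cmod (tri_a \<eta>) ^ 2"

definition solid_triangle :: "complex \<Rightarrow> complex \<Rightarrow> complex \<Rightarrow> complex set" where
  "solid_triangle u v w = convex hull {u, v, w}"

end

theory Submission
  imports Defs
begin

lemma tri_mem:
  fixes b c p :: complex
  assumes "0 \<le> s" "0 \<le> t" "s + t \<le> 1" "p = s *\<^sub>R b + t *\<^sub>R c"
  shows "p \<in> solid_triangle 0 b c"
  unfolding solid_triangle_def convex_hull_3_alt using assms by force

theorem lemma3p2:
  fixes \<eta> :: real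
  assumes "0 < \<eta>" and "\<eta> < pi / 3"
    and "tri_w0 \<eta> < 0"
  shows "complex_of_real (tri_w0 \<eta>) \<in>
           solid_triangle 0 (tri_z \<eta> 2) (tri_z \<eta> 3) \<inter>
           solid_triangle 0 (cnj (tri_z \<eta> 2)) (cnj (tri_z \<eta> 3))"
proof -
  define x where "x = cos \<eta>"
  define y where "y = sin \<eta>"
  define e where "e = Complex x (- y)"
  have xy: "x^2 + y^2 = 1" unfolding x_def y_def by simp
  have x1: "1/2 < x"
  proof -
    have "cos (pi/3) < cos \<eta>"
      using assms(1,2) by (intro cos_monotone_0_pi) auto
    thus ?thesis by (simp add: x_def cos_60)
  qed
  have eexp: "exp (- \<i> * of_real \<eta>) = e"
    by (simp add: complex_eq_iff e_def x_def y_def Re_exp Im_exp)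
  have ne: "cmod e = 1" using xy by (simp add: e_def cmod_def)
  have a: "tri_a \<eta> = e / of_real (2*x)"
    unfolding tri_a_def eexp x_def by simp
  define r where "r = 1/(2*x)"
  have ma: "cmod (tri_a \<eta>) = r" using x1 unfolding a r_def
    by (simp add: norm_divide ne)
  have r1: "r < 1" "0 < r" using x1 unfolding r_def by (auto simp: field_simps)
  have r4: "r^4 < 1" using r1 by (simp add: power_less_one_iff)
  define c where "c = 1 / (1 - r^4)"
  have cpos: "0 < c" using r4 by (simp add: c_def)
  have w0: "tri_w0 \<eta> = 1 - c * r^2" unfolding tri_w0_def tri_c_def ma c_def by simp
  define w where "w = tri_w0 \<eta>"
  have "1 < c * r^2" using assms(3) w0 by simp
  hence "1 - r^4 < r^2" using r4 by (simp add: c_def field_simps)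
  hence "x^2 * (64*x^4) < x^2 * (4 + 16*x^2)" using x1 unfolding r_def
    by (simp add: field_simps power_divide)
  hence "64*x^4 < 4 + 16*x^2" using x1 by (simp add: mult_less_cancel_left)
  hence "16*x^4 - 4*x^2 - 1 < 0" by simp
  hence x2: "2*x^2 \<le> 1"
  proof -
    assume h: "16*x^4 - 4*x^2 - 1 < 0"
    define q where "q = x^2"
    have q4: "x^4 = q*q" unfolding q_def by (simp add: power_def numeral_eq_Suc)
    show ?thesis
    proof (rule ccontr)
      assume "\<not> 2*x^2 \<le> 1"
      hence "1/2 < q" unfolding q_def by simp
      hence "q * (1/2) < q * q" by (intro mult_strict_left_mono) auto
      thus False using h \<open>1/2 < q\<close> unfolding q4 q_def[symmetric] by linarith
    qed
  qed
  define s where "s = w*32*x^4*(2*x^2-1)/c"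
  define t where "t = - w*16*x^4*(4*x^2-1)/c"
  have wneg: "w < 0" using assms(3) w_def by simp
  have s0: "0 \<le> s"
  proof -
    have "0 \<le> (-w)*(32*x^4)*(1-2*x^2)" using wneg x2 by (intro mult_nonneg_nonneg) auto
    thus ?thesis unfolding s_def using cpos by (simp add: algebra_simps)
  qed
  have x4: "1 \<le> 4*x^2"
  proof -
    have "(1/2)^2 < x^2" using x1 by (intro power_strict_mono) auto
    hence "1/4 < x^2" by (simp add: power_divide)
    thus ?thesis by linarith
  qed
  have t0: "0 \<le> t"
  proof -
    have "0 \<le> (-w)*(16*x^4)*(4*x^2-1)" using wneg x4 by (intro mult_nonneg_nonneg) auto
    thus ?thesis unfolding t_def using cpos by (simp add: algebra_simps)
  qed
  have st: "s + t = - 16*x^4*w/c" unfolding s_def t_def using cpos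
    by (simp add: field_simps)
  have "- w / c = r^4 + r^2 - 1" unfolding w_def w0 c_def using r4
    by (simp add: field_simps)
  moreover have "s + t = 16*x^4*(- w / c)" using st by simp
  ultimately have "s + t = 16*x^4*(r^4 + r^2 - 1)" by simp
  also have "\<dots> = 1 + 4*x^2 - 16*x^4" using x1 unfolding r_def
    by (simp add: field_simps power_divide)
  finally have st1: "s + t \<le> 1"
  proof -
    assume "s + t = 1 + 4*x^2 - 16*x^4"
    moreover have "x^4 = x^2 * x^2" by (simp add: power_def numeral_eq_Suc)
    moreover have "x^2 * 1 \<le> x^2 * (4*x^2)" using x4 by (intro mult_left_mono) auto
    ultimately show ?thesis by linarith
  qed
  have key: "of_real (4*x*(2*x^2-1)) * e^3 - of_real (4*x^2-1) * e^4 = (1::complex)"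
  proof -
    have "y^2 = 1 - x^2" using xy by simp
    thus ?thesis unfolding e_def
      by (simp add: complex_eq_iff power_def numeral_eq_Suc) algebra
  qed
  have tc: "tri_c \<eta> = c" by (simp add: tri_c_def ma c_def)
  have z2: "tri_z \<eta> 2 = of_real (c / (8*x^3)) * e^3"
  proof -
    have "(e / of_real (2*x))^3 = e^3 / of_real ((2*x)^3)" by (simp add: power_divide)
    also have "(2*x)^3 = 8*x^3" by (simp add: power_mult_distrib)
    finally show ?thesis unfolding tri_z_def tc a by simp
  qed
  have z3: "tri_z \<eta> 3 = of_real (c / (16*x^4)) * e^4"
  proof -
    have "(e / of_real (2*x))^4 = e^4 / of_real ((2*x)^4)" by (simp add: power_divide)
    also have "(2*x)^4 = 16*x^4" by (simp add: power_mult_distrib)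
    finally show ?thesis unfolding tri_z_def tc a by simp
  qed
  have eq: "complex_of_real w = s *\<^sub>R tri_z \<eta> 2 + t *\<^sub>R tri_z \<eta> 3"
  proof -
    have "s *\<^sub>R tri_z \<eta> 2 + t *\<^sub>R tri_z \<eta> 3
        = of_real w * (of_real (4*x*(2*x^2-1)) * e^3 - of_real (4*x^2-1) * e^4)"
    proof -
      have hs: "s * (c/(8*x^3)) = w*(4*x*(2*x^2-1))" unfolding s_def using cpos x1
        by (simp add: field_simps power_def numeral_eq_Suc)
      have ht: "t * (c/(16*x^4)) = - w*(4*x^2-1)" unfolding t_def using cpos x1
        by (simp add: field_simps)
      have "s *\<^sub>R tri_z \<eta> 2 + t *\<^sub>R tri_z \<eta> 3 =
          of_real (s * (c/(8*x^3))) * e^3 + of_real (t * (c/(16*x^4))) * e^4"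
        unfolding z2 z3 scaleR_conv_of_real by (simp only: of_real_mult mult.assoc)
      also have "\<dots> = of_real w * (of_real (4*x*(2*x^2-1)) * e^3 - of_real (4*x^2-1) * e^4)"
        unfolding hs ht by (simp add: algebra_simps)
      finally show ?thesis .
    qed
    thus ?thesis using key by simp
  qed
  have eq2: "complex_of_real w = s *\<^sub>R cnj (tri_z \<eta> 2) + t *\<^sub>R cnj (tri_z \<eta> 3)"
  proof -
    have "cnj (complex_of_real w) = cnj (s *\<^sub>R tri_z \<eta> 2 + t *\<^sub>R tri_z \<eta> 3)"
      using eq by simp
    thus ?thesis by (simp add: scaleR_conv_of_real)
  qed
  show ?thesis unfolding w_def[symmetric]
    using tri_mem[OF s0 t0 st1 eq] tri_mem[OF s0 t0 st1 eq2] by blast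
qed

end
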